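(* There is no sequence $(a_n)_{n\ge0}$ of positive integers such that the graph $G=G((a_n)_{n\ge0})$ satisfies $p_{\mathrm{cut,E}}(G)<p_{\mathrm{cut,V}}(G)$.
   Context: For a sequence $(a_n)_{n\ge0}$ of positive integers, $G((a_n)_{n\ge0})$ is the multigraph with vertex set $\mathbb{N}=\{0,1,2,\dots\}$ and, for each $n\ge0$, exactly $a_n$ parallel edges between $n$ and $n+1$ (and no other edges). For a locally finite, connected, infinite (multi)graph $G=(V,E)$ and a vertex $x$ (the thresholds below do not depend on $x$; one may take $x=0$), consider Bernoulli$(p)$ bond percolation (each edge open independently with probability $p$), with law $\mathbb{P}_p$, expectation $\mathbb{E}_p$, and open cluster $C(x)$ of $x$. A vertex cutset separating $x$ from infinity is a set $\Pi_V\subset V$ such that the connected component of $x$ in $G$ with the vertices of $\Pi_V$ deleted is finite; an edge cutset is a set $\Pi_E\subset E$ such that the component of $x$ in $G$ with the edges of $\Pi_E$ deleted is finite. Define $p_{\mathrm{cut,E}}=\sup\{p\ge0:\inf_{\Pi_E}\mathbb{E}_p[|C(x)\cap\Pi_E|]=0\}$, where $C(x)\cap\Pi_E$ is the set of (open) edges of $C(x)$ lying in $\Pi_E$ and the infimum is over all edge cutsets separating $x$ from infinity, and $p_{\mathrm{cut,V}}=\sup\{p\ge0:\inf_{\Pi_V}\mathbb{E}_p[|C(x)\cap\Pi_V|]=0\}$, where $C(x)\cap\Pi_V$ is the set of vertices of $C(x)$ in $\Pi_V$ and the infimum is over all vertex cutsets separating $x$ from infinity. *)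

theory Defs
  imports "HOL-Probability.Probability"
begin

(* The multigraph G((a_n)): vertices nat; edge (n,k) with k < a n is the k-th
   parallel edge between n and n+1. *)
definition edges :: "(nat \<Rightarrow> nat) \<Rightarrow> (nat \<times> nat) set" where
  "edges a = {(n, k). k < a n}"

definition endpoints :: "nat \<times> nat \<Rightarrow> nat set" where
  "endpoints e = {fst e, Suc (fst e)}"

definition adj_of :: "(nat \<times> nat) set \<Rightarrow> (nat \<times> nat) set" where
  "adj_of F = {(u, v). \<exists>e\<in>F. endpoints e = {u, v}}"

definition perc :: "(nat \<Rightarrow> nat) \<Rightarrow> real \<Rightarrow> ((nat \<times> nat) \<Rightarrow> bool) measure" where
  "perc a p = PiM (edges a) (\<lambda>_. measure_pmf (bernoulli_pmf p))"

definition open_edges :: "(nat \<Rightarrow> nat) \<Rightarrow> ((nat \<times> nat) \<Rightarrow> bool) \<Rightarrow> (nat \<times> nat) set" where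
  "open_edges a \<omega> = {e \<in> edges a. \<omega> e}"

definition cluster_V :: "(nat \<Rightarrow> nat) \<Rightarrow> ((nat \<times> nat) \<Rightarrow> bool) \<Rightarrow> nat \<Rightarrow> nat set" where
  "cluster_V a \<omega> x = {v. (x, v) \<in> (adj_of (open_edges a \<omega>))\<^sup>*}"

definition cluster_E :: "(nat \<Rightarrow> nat) \<Rightarrow> ((nat \<times> nat) \<Rightarrow> bool) \<Rightarrow> nat \<Rightarrow> (nat \<times> nat) set" where
  "cluster_E a \<omega> x = {e \<in> open_edges a \<omega>. endpoints e \<inter> cluster_V a \<omega> x \<noteq> {}}"

definition comp_minus_E :: "(nat \<Rightarrow> nat) \<Rightarrow> (nat \<times> nat) set \<Rightarrow> nat \<Rightarrow> nat set" where
  "comp_minus_E a S x = {v. (x, v) \<in> (adj_of (edges a - S))\<^sup>*}"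

definition comp_minus_V :: "(nat \<Rightarrow> nat) \<Rightarrow> nat set \<Rightarrow> nat \<Rightarrow> nat set" where
  "comp_minus_V a S x =
     {v. x \<notin> S \<and> (x, v) \<in> (adj_of {e \<in> edges a. endpoints e \<inter> S = {}})\<^sup>*}"

definition edge_cutset :: "(nat \<Rightarrow> nat) \<Rightarrow> nat \<Rightarrow> (nat \<times> nat) set \<Rightarrow> bool" where
  "edge_cutset a x S \<longleftrightarrow> S \<subseteq> edges a \<and> finite (comp_minus_E a S x)"

definition vertex_cutset :: "(nat \<Rightarrow> nat) \<Rightarrow> nat \<Rightarrow> nat set \<Rightarrow> bool" where
  "vertex_cutset a x S \<longleftrightarrow> finite (comp_minus_V a S x)"

definition ecard :: "'a set \<Rightarrow> ennreal" where
  "ecard A = (if finite A then of_nat (card A) else \<infinity>)"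

definition p_cut_E :: "(nat \<Rightarrow> nat) \<Rightarrow> real" where
  "p_cut_E a = Sup {p. 0 \<le> p \<and> p \<le> 1 \<and>
     (INF S\<in>{S. edge_cutset a 0 S}.
        \<integral>\<^sup>+ \<omega>. ecard (cluster_E a \<omega> 0 \<inter> S) \<partial>(perc a p)) = 0}"

definition p_cut_V :: "(nat \<Rightarrow> nat) \<Rightarrow> real" where
  "p_cut_V a = Sup {p. 0 \<le> p \<and> p \<le> 1 \<and>
     (INF S\<in>{S. vertex_cutset a 0 S}.
        \<integral>\<^sup>+ \<omega>. ecard (cluster_V a \<omega> 0 \<inter> S) \<partial>(perc a p)) = 0}"

end

theory Submission
  imports Defs
begin


definition lvl :: "(nat \<Rightarrow> nat) \<Rightarrow> nat \<Rightarrow> (nat \<times> nat) set" where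
  "lvl a i = {i} \<times> {..<a i}"

lemma adj_of_iff: "(u, v) \<in> adj_of F \<longleftrightarrow> (\<exists>k. ((u, k) \<in> F \<and> v = Suc u) \<or> ((v, k) \<in> F \<and> u = Suc v))"
  unfolding adj_of_def endpoints_def apply (auto simp: doubleton_eq_iff)
  apply (metis fst_conv)+
  done

lemma cluster_V_iff:
  "m \<in> cluster_V a \<omega> 0 \<longleftrightarrow> (\<forall>i<m. \<exists>k<a i. \<omega> (i, k))"
proof
  assume "m \<in> cluster_V a \<omega> 0"
  then have "(0, m) \<in> (adj_of (open_edges a \<omega>))\<^sup>*" by (simp add: cluster_V_def)
  then show "\<forall>i<m. \<exists>k<a i. \<omega> (i, k)"
  proof (induction rule: rtrancl_induct)
    case base then show ?case by simp
  next
    case (step u v)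
    from step.hyps(2) obtain k where
      "((u, k) \<in> open_edges a \<omega> \<and> v = Suc u) \<or> ((v, k) \<in> open_edges a \<omega> \<and> u = Suc v)"
      by (auto simp: adj_of_iff)
    then show ?case using step.IH
      by (auto simp: open_edges_def edges_def less_Suc_eq)
  qed
next
  assume H: "\<forall>i<m. \<exists>k<a i. \<omega> (i, k)"
  then show "m \<in> cluster_V a \<omega> 0"
  proof (induction m)
    case 0 then show ?case by (simp add: cluster_V_def)
  next
    case (Suc m)
    then obtain k where k: "k < a m" "\<omega> (m, k)" by auto
    have "(m, Suc m) \<in> adj_of (open_edges a \<omega>)"
      using k by (auto simp: adj_of_iff open_edges_def edges_def)
    with Suc show ?case by (auto simp: cluster_V_def intro: rtrancl_into_rtrancl)
  qed
qed

lemma cluster_E_lvl: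
  "cluster_E a \<omega> 0 \<inter> lvl a m =
    (if m \<in> cluster_V a \<omega> 0 then {m} \<times> {k. k < a m \<and> \<omega> (m, k)} else {})"
proof -
  have "Suc m \<in> cluster_V a \<omega> 0 \<Longrightarrow> m \<in> cluster_V a \<omega> 0"
    by (simp add: cluster_V_iff)
  then show ?thesis
    by (auto simp: cluster_E_def lvl_def open_edges_def edges_def endpoints_def)
qed

lemma lvl_cutset: "edge_cutset a 0 (lvl a m)"
proof -
  have "(0, v) \<in> (adj_of (edges a - lvl a m))\<^sup>* \<Longrightarrow> v \<le> m" for v
  proof (induction rule: rtrancl_induct)
    case base then show ?case by simp
  next
    case (step u v)
    then show ?case by (auto simp: adj_of_iff lvl_def edges_def) (metis Suc_le_eq le_neq_implies_less)
  qed
  then have "comp_minus_E a (lvl a m) 0 \<subseteq> {..m}" by (auto simp: comp_minus_E_def)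
  then show ?thesis
    by (auto simp: edge_cutset_def lvl_def edges_def intro: finite_subset)
qed

lemma one_cutset: "vertex_cutset a 0 {1}"
proof -
  have "(0, v) \<in> (adj_of {e \<in> edges a. endpoints e \<inter> {1} = {}})\<^sup>* \<Longrightarrow> v = 0" for v
  proof (induction rule: rtrancl_induct)
    case base then show ?case by simp
  next
    case (step u v)
    then show ?case by (auto simp: adj_of_iff endpoints_def)
  qed
  then have "comp_minus_V a {1} 0 \<subseteq> {0}" by (auto simp: comp_minus_V_def)
  then show ?thesis
    by (auto simp: vertex_cutset_def intro: finite_subset)
qed

lemma cutset_nonempty:
  assumes "\<And>n. 0 < a n" "vertex_cutset a 0 S"
  shows "S \<noteq> {}"
proof
  assume "S = {}"
  have "(0, v) \<in> (adj_of {e \<in> edges a. endpoints e \<inter> {} = {}})\<^sup>*" for v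
  proof (induction v)
    case 0 then show ?case by simp
  next
    case (Suc v)
    have "(v, Suc v) \<in> adj_of {e \<in> edges a. endpoints e \<inter> {} = {}}"
      using assms(1)[of v] by (auto simp: adj_of_iff edges_def)
    with Suc show ?case by (auto intro: rtrancl_into_rtrancl)
  qed
  then have "comp_minus_V a S 0 = UNIV" using \<open>S = {}\<close> by (auto simp: comp_minus_V_def)
  with assms(2) show False by (simp add: vertex_cutset_def)
qed



lemma pred_coord:
  assumes "e \<in> L"
  shows "Measurable.pred (PiM L (\<lambda>_. measure_pmf (q :: bool pmf))) (\<lambda>f. f e)"
  using measurable_component_singleton[OF assms, of "\<lambda>_. measure_pmf q"] by simp

definition Pm :: "(nat \<Rightarrow> nat) \<Rightarrow> real \<Rightarrow> nat \<Rightarrow> real" where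
  "Pm a q m = (\<Prod>i<m. 1 - q ^ a i)"

locale perc_loc =
  fixes a :: "nat \<Rightarrow> nat" and p :: real
  assumes apos: "\<And>n. 0 < a n" and p0: "0 \<le> p" and p1: "p \<le> 1"
begin

abbreviation "B \<equiv> (\<lambda>_::nat\<times>nat. measure_pmf (bernoulli_pmf p))"
abbreviation "M \<equiv> perc a p"

lemma M_eq: "M = PiM (edges a) B" by (simp add: perc_def)

sublocale PP: product_prob_space B "edges a"
  by unfold_locales

lemma prob_M: "prob_space M"
  unfolding M_eq by (rule PP.P.prob_space_axioms)

lemma edges_ne: "edges a \<noteq> {}"
  using apos[of 0] by (auto simp: edges_def)

lemma lvl_sub: "lvl a j \<subseteq> edges a" by (auto simp: lvl_def edges_def)

lemma coord_indep: "prob_space.indep_vars M B (\<lambda>e \<omega>. \<omega> e) (edges a)"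
proof -
  interpret prob_space M by (rule prob_M)
  have rv: "random_variable (B e) (\<lambda>\<omega>. \<omega> e)" if "e \<in> edges a" for e
    unfolding M_eq using measurable_component_singleton[OF that, of B] .
  show ?thesis
  proof (subst indep_vars_iff_distr_eq_PiM'[OF edges_ne rv])
    have "distr M (PiM (edges a) B) (\<lambda>x. \<lambda>i\<in>edges a. x i) = distr M M (\<lambda>x. x)"
      unfolding M_eq
      by (rule distr_cong) (auto simp: space_PiM)
    also have "\<dots> = M" by simp
    also have "M = PiM (edges a) (\<lambda>i. distr M (B i) (\<lambda>\<omega>. \<omega> i))"
      unfolding M_eq
    proof (rule PiM_cong)
      fix x assume "x \<in> edges a"
      then show "B x = distr (PiM (edges a) B) (B x) (\<lambda>\<omega>. \<omega> x)"
        using distr_PiM_component[of "edges a" B x] by (simp add: measure_pmf.prob_space_axioms)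
    qed simp
    finally show "distr M (PiM (edges a) B) (\<lambda>x. \<lambda>i\<in>edges a. x i) =
       PiM (edges a) (\<lambda>i. distr M (B i) (\<lambda>\<omega>. \<omega> i))" .
  qed auto
qed

lemma lvl_indep: "prob_space.indep_vars M (\<lambda>j. PiM (lvl a j) B) (\<lambda>j \<omega>. restrict \<omega> (lvl a j)) UNIV"
proof -
  interpret prob_space M by (rule prob_M)
  have "indep_vars (\<lambda>j. PiM (lvl a j) B) (\<lambda>j \<omega>. restrict (\<lambda>i. \<omega> i) (lvl a j)) UNIV"
    by (rule indep_vars_restrict[OF coord_indep lvl_sub])
       (auto simp: disjoint_family_on_def lvl_def)
  then show ?thesis by simp
qed

lemma indep_prod:
  assumes Y: "\<And>j. Measurable.pred (PiM (lvl a j) B) (Y j)"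
    and J: "finite J" "J \<noteq> {}"
  shows "measure M {\<omega>\<in>space M. \<forall>j\<in>J. Y j (restrict \<omega> (lvl a j))}
       = (\<Prod>j\<in>J. measure M {\<omega>\<in>space M. Y j (restrict \<omega> (lvl a j))})"
proof -
  interpret prob_space M by (rule prob_M)
  have I: "indep_vars (\<lambda>_. count_space UNIV) (\<lambda>j \<omega>. Y j (restrict \<omega> (lvl a j))) UNIV"
    by (rule indep_vars_compose2[where N="\<lambda>_. count_space UNIV" and Y=Y and X="\<lambda>j \<omega>. restrict \<omega> (lvl a j)" and M'="\<lambda>j. PiM (lvl a j) B"])
      (use lvl_indep Y in auto)
  have "prob (\<Inter>j\<in>J. (\<lambda>\<omega>. Y j (restrict \<omega> (lvl a j))) -` {True} \<inter> space M)
     = (\<Prod>j\<in>J. prob ((\<lambda>\<omega>. Y j (restrict \<omega> (lvl a j))) -` {True} \<inter> space M))"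
    by (rule indep_varsD[OF I J(2) J(1)]) auto
  moreover have "(\<Inter>j\<in>J. (\<lambda>\<omega>. Y j (restrict \<omega> (lvl a j))) -` {True} \<inter> space M)
     = {\<omega>\<in>space M. \<forall>j\<in>J. Y j (restrict \<omega> (lvl a j))}" using J by auto
  moreover have "\<And>j. (\<lambda>\<omega>. Y j (restrict \<omega> (lvl a j))) -` {True} \<inter> space M
     = {\<omega>\<in>space M. Y j (restrict \<omega> (lvl a j))}" by auto
  ultimately show ?thesis by simp
qed


lemma space_M: "space M = PiE (edges a) (\<lambda>_. UNIV)"
  by (simp add: M_eq space_PiM)

lemma lvl_finite: "finite (lvl a i)" by (simp add: lvl_def)
lemma card_lvl: "card (lvl a i) = a i" by (simp add: lvl_def card_cartesian_product)

lemma pred_lvl_open: "Measurable.pred (PiM (lvl a j) B) (\<lambda>f. \<exists>k\<in>{..<a j}. f (j, k))"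
  by (intro pred_intros_finite pred_coord) (auto simp: lvl_def)

lemma pred_lvl_single: "k < a j \<Longrightarrow> Measurable.pred (PiM (lvl a j) B) (\<lambda>f. f (j, k))"
  by (intro pred_coord) (auto simp: lvl_def)

lemma lvl_ne: "lvl a i \<noteq> {}"
  using apos[of i] by (auto simp: lvl_def)

lemma closed_level:
  "measure M {\<omega>\<in>space M. \<forall>e\<in>lvl a i. \<omega> e \<in> {False}} = (1 - p) ^ a i"
proof -
  have "emeasure M {\<omega>\<in>space M. \<forall>e\<in>lvl a i. \<omega> e \<in> {False}} = (\<Prod>e\<in>lvl a i. emeasure (B e) {False})"
    unfolding M_eq by (rule PP.emeasure_PiM_Collect) (auto simp: lvl_sub lvl_finite)
  also have "\<dots> = (\<Prod>e\<in>lvl a i. ennreal (1 - p))"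
    using p0 p1 by (simp add: emeasure_pmf_single)
  also have "\<dots> = ennreal ((1 - p) ^ a i)"
    using p1 by (simp add: prod_ennreal card_lvl ennreal_power)
  finally show ?thesis using p1 by (simp add: measure_def)
qed

lemma open_level:
  "measure M {\<omega>\<in>space M. \<exists>k\<in>{..<a i}. restrict \<omega> (lvl a i) (i, k)} = 1 - (1 - p) ^ a i"
proof -
  interpret prob_space M by (rule prob_M)
  have "{\<omega>\<in>space M. \<exists>k\<in>{..<a i}. restrict \<omega> (lvl a i) (i, k)}
     = space M - {\<omega>\<in>space M. \<forall>e\<in>lvl a i. \<omega> e \<in> {False}}"
    by (auto simp: lvl_def)
  moreover have "{\<omega>\<in>space M. \<forall>e\<in>lvl a i. \<omega> e \<in> {False}} \<in> sets M"
    unfolding M_eq using lvl_ne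
    by (intro sets.sets_Collect_finite_All' lvl_finite) (auto intro!: sets_Collect_single' simp: lvl_sub[THEN subsetD])
  ultimately show ?thesis using closed_level[of i] by (simp add: prob_compl)
qed

lemma single_edge:
  assumes "k < a m"
  shows "measure M {\<omega>\<in>space M. restrict \<omega> (lvl a m) (m, k)} = p"
proof -
  have e: "(m, k) \<in> edges a" using assms by (simp add: edges_def)
  have "{\<omega>\<in>space M. restrict \<omega> (lvl a m) (m, k)} = {\<omega>\<in>space M. \<omega> (m, k) \<in> {True}}"
    using assms by (auto simp: lvl_def)
  moreover have "emeasure M {\<omega>\<in>space M. \<omega> (m, k) \<in> {True}} = emeasure (B (m,k)) {True}"
    unfolding M_eq by (rule PP.emeasure_PiM_Collect_single[OF e]) simp
  ultimately show ?thesis using p0 p1 by (simp add: measure_def emeasure_pmf_single)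
qed


definition Ev :: "nat \<Rightarrow> ((nat \<times> nat) \<Rightarrow> bool) set" where
  "Ev m = {\<omega>\<in>space M. \<forall>i<m. \<exists>k<a i. \<omega> (i, k)}"

lemma Ev_sets: "Ev m \<in> sets M"
proof -
  have "Ev m = {\<omega>\<in>space M. \<forall>i\<in>{..<m}. \<exists>k\<in>{..<a i}. \<omega> (i, k)}"
    by (auto simp: Ev_def)
  also have "\<dots> \<in> sets M"
    unfolding M_eq
    by (intro sets.sets_Collect_finite_All sets.sets_Collect_finite_Ex) (auto intro!: sets_Collect_single' simp: edges_def)
  finally show ?thesis .
qed

lemma measure_Ev: "measure M (Ev m) = Pm a (1 - p) m"
proof (cases "m = 0")
  case True
  interpret prob_space M by (rule prob_M)
  have "Ev m = space M" using True by (auto simp: Ev_def)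
  then show ?thesis using True by (simp add: Pm_def prob_space)
next
  case False
  have "Ev m = {\<omega>\<in>space M. \<forall>j\<in>{..<m}. (\<lambda>j f. \<exists>k\<in>{..<a j}. f (j, k)) j (restrict \<omega> (lvl a j))}"
    by (auto simp: Ev_def lvl_def)
  also have "measure M \<dots> = (\<Prod>j\<in>{..<m}. measure M {\<omega>\<in>space M. (\<lambda>j f. \<exists>k\<in>{..<a j}. f (j, k)) j (restrict \<omega> (lvl a j))})"
  proof (rule indep_prod)
    show "{..<m} \<noteq> {}" using False by (metis lessThan_iff neq0_conv empty_iff)
  qed (use pred_lvl_open in auto)
  also have "\<dots> = Pm a (1 - p) m"
    unfolding Pm_def using open_level by simp
  finally show ?thesis .
qed

lemma measure_Ev_edge:
  assumes "k < a m"
  shows "measure M (Ev m \<inter> {\<omega>. \<omega> (m, k)}) = Pm a (1 - p) m * p"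
proof -
  define Y where "Y = (\<lambda>j f. if j < m then (\<exists>k\<in>{..<a j}. f (j, k)) else if j = m then f (m, k) else True)"
  have "Ev m \<inter> {\<omega>. \<omega> (m, k)} = {\<omega>\<in>space M. \<forall>j\<in>{..m}. Y j (restrict \<omega> (lvl a j))}"
  proof (intro set_eqI iffI)
    fix \<omega> assume "\<omega> \<in> Ev m \<inter> {\<omega>. \<omega> (m, k)}"
    then show "\<omega> \<in> {\<omega>\<in>space M. \<forall>j\<in>{..m}. Y j (restrict \<omega> (lvl a j))}"
      using assms by (auto simp: Ev_def lvl_def Y_def le_less)
  next
    fix \<omega> assume H: "\<omega> \<in> {\<omega>\<in>space M. \<forall>j\<in>{..m}. Y j (restrict \<omega> (lvl a j))}"
    have "\<forall>i<m. \<exists>k<a i. \<omega> (i, k)"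
    proof (intro allI impI)
      fix i assume "i < m"
      then have "Y i (restrict \<omega> (lvl a i))" using H by auto
      then show "\<exists>k<a i. \<omega> (i, k)" using \<open>i < m\<close> by (auto simp: Y_def lvl_def)
    qed
    moreover have "\<omega> (m, k)"
    proof -
      have "Y m (restrict \<omega> (lvl a m))" using H by auto
      then show ?thesis using assms by (auto simp: Y_def lvl_def)
    qed
    ultimately show "\<omega> \<in> Ev m \<inter> {\<omega>. \<omega> (m, k)}" using H by (auto simp: Ev_def)
  qed
  also have "measure M \<dots> = (\<Prod>j\<in>{..m}. measure M {\<omega>\<in>space M. Y j (restrict \<omega> (lvl a j))})"
  proof (rule indep_prod)
    fix j show "Measurable.pred (PiM (lvl a j) B) (Y j)"
    proof (cases "j < m")
      case True then show ?thesis unfolding Y_def using pred_lvl_open[of j] by simp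
    next
      case False
      show ?thesis
      proof (cases "j = m")
        case True then show ?thesis unfolding Y_def using pred_lvl_single[OF assms] by simp
      next
        case False2: False
        then show ?thesis unfolding Y_def using False by simp
      qed
    qed
  qed auto
  also have "\<dots> = (\<Prod>j\<in>{..<m}. measure M {\<omega>\<in>space M. Y j (restrict \<omega> (lvl a j))}) * measure M {\<omega>\<in>space M. Y m (restrict \<omega> (lvl a m))}"
    by (simp add: lessThan_Suc_atMost[symmetric])
  also have "\<dots> = Pm a (1 - p) m * p"
    unfolding Pm_def Y_def using open_level single_edge[OF assms] by simp
  finally show ?thesis .
qed


lemma emeasure_Ev: "emeasure M (Ev m) = ennreal (Pm a (1 - p) m)"
proof -
  interpret prob_space M by (rule prob_M)
  show ?thesis by (simp add: emeasure_eq_measure measure_Ev)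
qed

lemma Ev_edge_sets: "Ev m \<inter> {\<omega>. \<omega> (m, k)} \<in> sets M" if "k < a m"
proof -
  have "Ev m \<inter> {\<omega>. \<omega> (m, k)} = Ev m \<inter> {\<omega>\<in>space M. \<omega> (m, k)}" by (auto simp: Ev_def)
  also have "\<dots> \<in> sets M"
    using that by (intro sets.Int Ev_sets) (auto simp: M_eq edges_def intro!: sets_Collect_single')
  finally show ?thesis .
qed

lemma emeasure_Ev_edge: "k < a m \<Longrightarrow> emeasure M (Ev m \<inter> {\<omega>. \<omega> (m, k)}) = ennreal (Pm a (1 - p) m * p)"
proof -
  assume k: "k < a m"
  interpret prob_space M by (rule prob_M)
  show ?thesis by (simp add: emeasure_eq_measure measure_Ev_edge[OF k])
qed

lemma Ev_iff: "\<omega> \<in> space M \<Longrightarrow> \<omega> \<in> Ev m \<longleftrightarrow> m \<in> cluster_V a \<omega> 0"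
  by (simp add: Ev_def cluster_V_iff)

lemma int_V_lower:
  assumes "m \<in> S"
  shows "ennreal (Pm a (1 - p) m) \<le> (\<integral>\<^sup>+ \<omega>. ecard (cluster_V a \<omega> 0 \<inter> S) \<partial>M)"
proof -
  have "ennreal (Pm a (1 - p) m) = (\<integral>\<^sup>+ \<omega>. indicator (Ev m) \<omega> \<partial>M)"
    by (simp add: emeasure_Ev Ev_sets)
  also have "\<dots> \<le> (\<integral>\<^sup>+ \<omega>. ecard (cluster_V a \<omega> 0 \<inter> S) \<partial>M)"
  proof (rule nn_integral_mono)
    fix \<omega> assume \<omega>: "\<omega> \<in> space M"
    show "indicator (Ev m) \<omega> \<le> ecard (cluster_V a \<omega> 0 \<inter> S)"
    proof (cases "\<omega> \<in> Ev m")
      case True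
      then have "m \<in> cluster_V a \<omega> 0 \<inter> S" using Ev_iff[OF \<omega>] assms by auto
      then have "ecard (cluster_V a \<omega> 0 \<inter> S) \<ge> 1"
        unfolding ecard_def
        by (auto simp: Suc_le_eq card_gt_0_iff)
      then show ?thesis using True by simp
    qed simp
  qed
  finally show ?thesis .
qed

lemma int_V_single:
  "(\<integral>\<^sup>+ \<omega>. ecard (cluster_V a \<omega> 0 \<inter> {m}) \<partial>M) = ennreal (Pm a (1 - p) m)"
proof -
  have "(\<integral>\<^sup>+ \<omega>. ecard (cluster_V a \<omega> 0 \<inter> {m}) \<partial>M) = (\<integral>\<^sup>+ \<omega>. indicator (Ev m) \<omega> \<partial>M)"
    by (rule nn_integral_cong) (auto simp: ecard_def Ev_iff Int_insert_right)
  also have "\<dots> = ennreal (Pm a (1 - p) m)"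
    by (simp add: emeasure_Ev Ev_sets)
  finally show ?thesis .
qed

lemma card_filter_sum:
  "(of_nat (card {k. k < (n::nat) \<and> P k}) :: ennreal) = (\<Sum>k<n. if P k then 1 else 0)"
proof (induction n)
  case 0 then show ?case by simp
next
  case (Suc n)
  have "{k. k < Suc n \<and> P k} = (if P n then insert n {k. k < n \<and> P k} else {k. k < n \<and> P k})"
    by (auto simp: less_Suc_eq)
  then show ?case using Suc by (simp add: card_insert_if)
qed

lemma pointwise_E:
  assumes \<omega>: "\<omega> \<in> space M"
  shows "ecard (cluster_E a \<omega> 0 \<inter> lvl a m) = (\<Sum>k<a m. indicator (Ev m \<inter> {\<omega>. \<omega> (m, k)}) \<omega>)"
proof (cases "m \<in> cluster_V a \<omega> 0")
  case True
  then have ev: "\<omega> \<in> Ev m" using Ev_iff[OF \<omega>] by simp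
  define K where "K = {k. k < a m \<and> \<omega> (m, k)}"
  have fin: "finite K" by (simp add: K_def)
  have e1: "cluster_E a \<omega> 0 \<inter> lvl a m = {m} \<times> K"
    unfolding cluster_E_lvl K_def using True by (simp only: if_True)
  have c: "card ({m} \<times> K) = card K"
    by (simp add: card_cartesian_product)
  have "ecard (cluster_E a \<omega> 0 \<inter> lvl a m) = of_nat (card K)"
    unfolding e1 ecard_def c using fin by simp
  also have "\<dots> = (\<Sum>k<a m. if \<omega> (m, k) then 1 else 0)"
    unfolding K_def by (rule card_filter_sum)
  also have "\<dots> = (\<Sum>k<a m. indicator (Ev m \<inter> {\<omega>. \<omega> (m, k)}) \<omega>)"
    by (rule sum.cong) (simp_all add: indicator_def ev)
  finally show ?thesis .
next
  case False
  then have "\<omega> \<notin> Ev m" using Ev_iff[OF \<omega>] by simp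
  then have "\<And>k. indicator (Ev m \<inter> {\<omega>. \<omega> (m, k)}) \<omega> = (0::ennreal)" by (simp add: indicator_def)
  then show ?thesis using False unfolding cluster_E_lvl by (simp add: ecard_def)
qed

lemma int_E_level:
  "(\<integral>\<^sup>+ \<omega>. ecard (cluster_E a \<omega> 0 \<inter> lvl a m) \<partial>M) = ennreal (real (a m) * Pm a (1 - p) m * p)"
proof -
  have "(\<integral>\<^sup>+ \<omega>. ecard (cluster_E a \<omega> 0 \<inter> lvl a m) \<partial>M)
      = (\<integral>\<^sup>+ \<omega>. (\<Sum>k<a m. indicator (Ev m \<inter> {\<omega>. \<omega> (m, k)}) \<omega>) \<partial>M)"
  proof (rule nn_integral_cong)
    fix \<omega> assume \<omega>: "\<omega> \<in> space M"
    show "ecard (cluster_E a \<omega> 0 \<inter> lvl a m) = (\<Sum>k<a m. indicator (Ev m \<inter> {\<omega>. \<omega> (m, k)}) \<omega>)"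
      by (rule pointwise_E[OF \<omega>])
  qed
  also have "\<dots> = (\<Sum>k<a m. (\<integral>\<^sup>+ \<omega>. indicator (Ev m \<inter> {\<omega>. \<omega> (m, k)}) \<omega> \<partial>M))"
    by (rule nn_integral_sum) (auto intro!: borel_measurable_indicator Ev_edge_sets)
  also have "\<dots> = (\<Sum>k<a m. ennreal (Pm a (1 - p) m * p))"
    by (rule sum.cong) (auto simp: Ev_edge_sets emeasure_Ev_edge)
  also have "\<dots> = ennreal (real (a m) * Pm a (1 - p) m * p)"
  proof -
    have "(\<Sum>k<a m. ennreal (Pm a (1 - p) m * p)) = of_nat (a m) * ennreal (Pm a (1 - p) m * p)"
      by (simp only: sum_constant card_lessThan)
    also have "\<dots> = ennreal (real (a m)) * ennreal (Pm a (1 - p) m * p)"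
      by (simp only: ennreal_of_nat_eq_real_of_nat)
    also have "\<dots> = ennreal (real (a m) * (Pm a (1 - p) m * p))"
      by (rule ennreal_mult'[symmetric]) simp
    finally show ?thesis by (simp only: mult.assoc)
  qed
  finally show ?thesis .
qed

end


lemma geom_bound:
  fixes \<rho> :: real
  assumes "0 \<le> \<rho>" "\<rho> < 1"
  shows "real n * \<rho> ^ n \<le> 1 / (1 - \<rho>)"
proof -
  have "real n * \<rho> ^ n = (\<Sum>j<n. \<rho> ^ n)" by simp
  also have "\<dots> \<le> (\<Sum>j<n. \<rho> ^ j)"
    by (rule sum_mono) (use assms in \<open>auto intro: power_decreasing\<close>)
  also have "\<dots> = (1 - \<rho> ^ n) / (1 - \<rho>)"
    using assms by (simp add: sum_gp_strict)
  also have "\<dots> \<le> 1 / (1 - \<rho>)"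
    using assms by (intro divide_right_mono) auto
  finally show ?thesis .
qed

lemma Pm_Suc: "Pm a q (Suc n) = Pm a q n * (1 - q ^ a n)"
  by (simp add: Pm_def)

lemma Pm_nonneg: "0 \<le> q \<Longrightarrow> q \<le> 1 \<Longrightarrow> 0 \<le> Pm a q n"
  unfolding Pm_def by (intro prod_nonneg) (auto intro: power_le_one)

lemma Pm_pos: "0 \<le> q \<Longrightarrow> q < 1 \<Longrightarrow> (\<And>n. 0 < a n) \<Longrightarrow> 0 < Pm a q n"
  unfolding Pm_def by (intro prod_pos) (auto simp: power_less_one_iff)

lemma Pm_mono_q: "0 \<le> q \<Longrightarrow> q \<le> q' \<Longrightarrow> q' \<le> 1 \<Longrightarrow> Pm a q' n \<le> Pm a q n"
  unfolding Pm_def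
  by (intro prod_mono) (auto intro: power_le_one power_mono)

lemma Pm_dec:
  assumes "0 \<le> q" "q \<le> 1" "m \<le> n"
  shows "Pm a q n \<le> Pm a q m"
  using assms(3)
proof (induction n rule: dec_induct)
  case base then show ?case by simp
next
  case (step n)
  have "Pm a q (Suc n) = Pm a q n * (1 - q ^ a n)" by (rule Pm_Suc)
  also have "\<dots> \<le> Pm a q n"
    using Pm_nonneg[of q a n] assms by (intro mult_left_le) (auto simp: zero_le_power)
  finally show ?case using step.IH by simp
qed

lemma Pm_weier:
  assumes "0 \<le> q" "q \<le> 1" "M \<le> n"
  shows "Pm a q M * (1 - (\<Sum>i\<in>{M..<n}. q ^ a i)) \<le> Pm a q n"
  using assms(3)
proof (induction n rule: dec_induct)
  case base then show ?case by simp
next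
  case (step n)
  let ?S = "(\<Sum>i\<in>{M..<n}. q ^ a i)"
  let ?s = "q ^ a n"
  have s0: "0 \<le> ?s" "?s \<le> 1" using assms by (auto intro: power_le_one)
  have S0: "0 \<le> ?S" using assms by (auto intro: sum_nonneg)
  have PM: "0 \<le> Pm a q M" using Pm_nonneg assms by auto
  have "Pm a q M * (1 - (\<Sum>i\<in>{M..<Suc n}. q ^ a i)) = Pm a q M * (1 - ?S - ?s)"
    using step.hyps by simp
  also have "\<dots> \<le> Pm a q M * ((1 - ?S) * (1 - ?s))"
    using PM S0 s0 by (intro mult_left_mono) (auto simp: algebra_simps)
  also have "\<dots> = (Pm a q M * (1 - ?S)) * (1 - ?s)" by simp
  also have "\<dots> \<le> Pm a q n * (1 - ?s)"
    using step.IH s0 by (intro mult_right_mono) auto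
  also have "\<dots> = Pm a q (Suc n)" by (simp add: Pm_Suc)
  finally show ?case .
qed

lemma Pm_telescope:
  assumes "M \<le> n"
  shows "(\<Sum>i\<in>{M..<n}. q ^ a i * Pm a q i) = Pm a q M - Pm a q n"
proof -
  have "(\<Sum>i\<in>{M..<n}. q ^ a i * Pm a q i) = (\<Sum>i\<in>{M..<n}. Pm a q i - Pm a q (Suc i))"
    by (rule sum.cong) (auto simp: Pm_Suc algebra_simps)
  also have "\<dots> = Pm a q M - Pm a q n"
    using sum_Suc_diff'[OF assms, of "Pm a q"] by (simp add: sum_subtractf)
  finally show ?thesis .
qed

lemma key_analytic:
  fixes q q' c :: real
  assumes apos: "\<And>n. 0 < a n" and q0: "0 \<le> q" and qq: "q < q'" and q1: "q' \<le> 1"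
    and c: "0 < c"
    and lowE: "\<And>m. c \<le> real (a m) * Pm a q' m"
    and V: "\<And>\<epsilon>. 0 < \<epsilon> \<Longrightarrow> \<exists>m. Pm a q m < \<epsilon>"
  shows False
proof -
  have q'0: "0 < q'" using q0 qq by simp
  define \<rho> where "\<rho> = q / q'"
  have \<rho>0: "0 \<le> \<rho>" and \<rho>1: "\<rho> < 1" using q0 qq q'0 by (auto simp: \<rho>_def)
  define K where "K = 1 / (1 - \<rho>)"
  have K0: "0 < K" using \<rho>1 by (simp add: K_def)
  have qeq: "q = \<rho> * q'" using q'0 by (simp add: \<rho>_def)
  have F2: "q ^ a i \<le> (K / c) * (q' ^ a i * Pm a q' i)" for i
  proof -
    have ai: "0 < real (a i)" using apos[of i] by simp
    have "\<rho> ^ a i \<le> K / real (a i)"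
    proof -
      have "real (a i) * \<rho> ^ a i \<le> K" using geom_bound[OF \<rho>0 \<rho>1, of "a i"] by (simp add: K_def)
      then show ?thesis using ai by (simp add: pos_le_divide_eq mult.commute)
    qed
    also have "\<dots> \<le> K * Pm a q' i / c"
      using lowE[of i] ai c K0 by (simp add: field_simps mult_left_mono)
    finally have r: "\<rho> ^ a i \<le> K * Pm a q' i / c" .
    have "q ^ a i = \<rho> ^ a i * q' ^ a i" by (simp add: qeq power_mult_distrib)
    also have "\<dots> \<le> (K * Pm a q' i / c) * q' ^ a i"
      using r q'0 by (intro mult_right_mono) auto
    finally show ?thesis by (simp add: field_simps)
  qed
  obtain M where M: "Pm a q M < c / (2 * K)"
    using V[of "c / (2 * K)"] c K0 by auto
  have PM0: "0 < Pm a q M" using Pm_pos[OF q0 _ apos] qq q1 by simp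
  have bound: "Pm a q M / 2 \<le> Pm a q n" for n
  proof (cases "M \<le> n")
    case True
    have "(\<Sum>i\<in>{M..<n}. q ^ a i) \<le> (\<Sum>i\<in>{M..<n}. (K / c) * (q' ^ a i * Pm a q' i))"
      by (rule sum_mono) (rule F2)
    also have "\<dots> = (K / c) * (Pm a q' M - Pm a q' n)"
      by (simp only: sum_distrib_left[symmetric] Pm_telescope[OF True])
    also have "\<dots> \<le> (K / c) * Pm a q M"
      using Pm_nonneg[of q' a n] Pm_mono_q[of q q' a M] q0 qq q1 K0 c
      by (intro mult_left_mono) auto
    also have "\<dots> \<le> 1 / 2"
      using M K0 c by (simp add: field_simps)
    finally have S: "(\<Sum>i\<in>{M..<n}. q ^ a i) \<le> 1 / 2" .
    have "Pm a q M / 2 \<le> Pm a q M * (1 - (\<Sum>i\<in>{M..<n}. q ^ a i))"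
      using S PM0 by (simp add: field_simps)
    also have "\<dots> \<le> Pm a q n" using Pm_weier[OF q0 _ True] qq q1 by simp
    finally show ?thesis .
  next
    case False
    then have "Pm a q M \<le> Pm a q n" using Pm_dec[where q=q and a=a and m=n and n=M] q0 qq q1 by simp
    then show ?thesis using PM0 by simp
  qed
  obtain n where "Pm a q n < Pm a q M / 2" using V[of "Pm a q M / 2"] PM0 by auto
  with bound[of n] show False by simp
qed



lemma E_mem:
  assumes apos: "\<And>n. 0 < a n" and p0: "0 \<le> p" and p1: "p \<le> 1"
    and small: "\<And>\<epsilon>. 0 < \<epsilon> \<Longrightarrow> \<exists>m. real (a m) * Pm a (1 - p) m * p < \<epsilon>"
  shows "p \<in> {p. 0 \<le> p \<and> p \<le> 1 \<and>
     (INF S\<in>{S. edge_cutset a 0 S}.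
        \<integral>\<^sup>+ \<omega>. ecard (cluster_E a \<omega> 0 \<inter> S) \<partial>(perc a p)) = 0}"
proof -
  interpret perc_loc a p using apos p0 p1 by unfold_locales auto
  let ?I = "(INF S\<in>{S. edge_cutset a 0 S}. \<integral>\<^sup>+ \<omega>. ecard (cluster_E a \<omega> 0 \<inter> S) \<partial>(perc a p))"
  have "?I \<le> 0 + ennreal e" if e: "0 < e" for e
  proof -
    obtain m where m: "real (a m) * Pm a (1 - p) m * p < e" using small[OF e] by auto
    have "?I \<le> (\<integral>\<^sup>+ \<omega>. ecard (cluster_E a \<omega> 0 \<inter> lvl a m) \<partial>(perc a p))"
      by (rule INF_lower) (simp add: lvl_cutset)
    also have "\<dots> = ennreal (real (a m) * Pm a (1 - p) m * p)" by (rule int_E_level)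
    also have "\<dots> \<le> ennreal e" using m by (intro ennreal_leI) simp
    finally show ?thesis by simp
  qed
  then have "?I \<le> 0" by (rule ennreal_le_epsilon)
  then show ?thesis using p0 p1 by simp
qed

lemma V_mem_imp:
  assumes apos: "\<And>n. 0 < a n"
    and mem: "p \<in> {p. 0 \<le> p \<and> p \<le> 1 \<and>
     (INF S\<in>{S. vertex_cutset a 0 S}.
        \<integral>\<^sup>+ \<omega>. ecard (cluster_V a \<omega> 0 \<inter> S) \<partial>(perc a p)) = 0}"
    and e: "0 < e"
  shows "\<exists>m. Pm a (1 - p) m < e"
proof -
  from mem have p0: "0 \<le> p" and p1: "p \<le> 1" and
    I: "(INF S\<in>{S. vertex_cutset a 0 S}. \<integral>\<^sup>+ \<omega>. ecard (cluster_V a \<omega> 0 \<inter> S) \<partial>(perc a p)) = 0"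
    by auto
  interpret perc_loc a p using apos p0 p1 by unfold_locales auto
  have "(INF S\<in>{S. vertex_cutset a 0 S}. \<integral>\<^sup>+ \<omega>. ecard (cluster_V a \<omega> 0 \<inter> S) \<partial>(perc a p)) < ennreal e"
    using I e by simp
  then obtain S where S: "vertex_cutset a 0 S"
    and lt: "(\<integral>\<^sup>+ \<omega>. ecard (cluster_V a \<omega> 0 \<inter> S) \<partial>(perc a p)) < ennreal e"
    by (auto simp: INF_less_iff)
  from cutset_nonempty[OF apos S] obtain m where m: "m \<in> S" by auto
  have "ennreal (Pm a (1 - p) m) < ennreal e"
    using int_V_lower[OF m] lt by (rule le_less_trans)
  then have "Pm a (1 - p) m < e"
    using Pm_nonneg[of "1 - p" a m] p0 p1 by (simp add: ennreal_less_iff)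
  then show ?thesis by auto
qed

lemma zero_V:
  assumes apos: "\<And>n. 0 < a n"
  shows "(0::real) \<in> {p. 0 \<le> p \<and> p \<le> 1 \<and>
     (INF S\<in>{S. vertex_cutset a 0 S}.
        \<integral>\<^sup>+ \<omega>. ecard (cluster_V a \<omega> 0 \<inter> S) \<partial>(perc a p)) = 0}"
proof -
  interpret perc_loc a 0 using apos by unfold_locales auto
  have "(INF S\<in>{S. vertex_cutset a 0 S}. \<integral>\<^sup>+ \<omega>. ecard (cluster_V a \<omega> 0 \<inter> S) \<partial>(perc a 0))
      \<le> (\<integral>\<^sup>+ \<omega>. ecard (cluster_V a \<omega> 0 \<inter> {1}) \<partial>(perc a 0))"
    by (rule INF_lower) (use one_cutset[of a] in blast)
  also have "\<dots> = ennreal (Pm a (1 - 0) 1)" by (rule int_V_single)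
  also have "\<dots> = 0" by (simp add: Pm_def)
  finally show ?thesis by simp
qed

lemma cut_le:
  assumes apos: "\<And>n. 0 < a n"
  shows "p_cut_V a \<le> p_cut_E a"
proof -
  define SE where "SE = {p. 0 \<le> p \<and> p \<le> 1 \<and>
     (INF S\<in>{S. edge_cutset a 0 S}.
        \<integral>\<^sup>+ \<omega>. ecard (cluster_E a \<omega> 0 \<inter> S) \<partial>(perc a p)) = (0::ennreal)}"
  define SV where "SV = {p. 0 \<le> p \<and> p \<le> 1 \<and>
     (INF S\<in>{S. vertex_cutset a 0 S}.
        \<integral>\<^sup>+ \<omega>. ecard (cluster_V a \<omega> 0 \<inter> S) \<partial>(perc a p)) = (0::ennreal)}"
  have bdd: "bdd_above SE" unfolding SE_def by (rule bdd_aboveI[of _ 1]) auto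
  have SE0: "(0::real) \<in> SE" unfolding SE_def
    by (rule E_mem[OF apos]) auto
  have main: "p' \<in> SE" if p: "p \<in> SV" and p'0: "0 \<le> p'" and p'p: "p' < p" for p p'
  proof -
    have p1: "p \<le> 1" using p unfolding SV_def mem_Collect_eq by blast
    show ?thesis unfolding SE_def
    proof (rule E_mem[OF apos p'0])
      show "p' \<le> 1" using p'p p1 by simp
      fix \<epsilon> :: real assume e: "0 < \<epsilon>"
      show "\<exists>m. real (a m) * Pm a (1 - p') m * p' < \<epsilon>"
      proof (rule ccontr)
        assume "\<not> ?thesis"
        then have lo: "\<epsilon> \<le> real (a m) * Pm a (1 - p') m * p'" for m by (simp add: not_less)
        show False
        proof (cases "p' = 0")
          case True then show False using lo[of 0] e by simp
        next
          case False
          then have p'pos: "0 < p'" using p'0 by simp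
          have h1: "0 \<le> 1 - p" using p1 by simp
          have h2: "1 - p < 1 - p'" using p'p by simp
          have h3: "1 - p' \<le> 1" using p'0 by simp
          have h4: "0 < \<epsilon> / p'" using e p'pos by simp
          have h5: "\<epsilon> / p' \<le> real (a m) * Pm a (1 - p') m" for m
          proof -
            have "\<epsilon> \<le> real (a m) * Pm a (1 - p') m * p'" by (rule lo)
            then show ?thesis using p'pos by (simp add: pos_divide_le_eq)
          qed
          have h6: "\<exists>m. Pm a (1 - p) m < \<epsilon>'" if "0 < \<epsilon>'" for \<epsilon>'
          proof -
            have pv: "p \<in> {p. 0 \<le> p \<and> p \<le> 1 \<and>
                (INF S\<in>{S. vertex_cutset a 0 S}.
                \<integral>\<^sup>+ \<omega>. ecard (cluster_V a \<omega> 0 \<inter> S) \<partial>(perc a p)) = 0}"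
              using p unfolding SV_def .
            show ?thesis by (rule V_mem_imp[OF apos pv that])
          qed
          show False by (rule key_analytic[OF apos h1 h2 h3 h4 h5 h6])
        qed
      qed
    qed
  qed
  have "Sup SV \<le> Sup SE"
  proof (rule cSup_least)
    have "(0::real) \<in> SV" unfolding SV_def by (rule zero_V[OF apos])
    then show "SV \<noteq> {}" by auto
    fix x assume x: "x \<in> SV"
    show "x \<le> Sup SE"
    proof (cases "x = 0")
      case True then show ?thesis using cSup_upper[OF SE0 bdd] by simp
    next
      case False
      have "0 \<le> x" using x unfolding SV_def mem_Collect_eq by blast
      then have x0: "0 < x" using False by simp
      show ?thesis
      proof (rule dense_le_bounded[OF x0])
        fix w assume "0 < w" "w < x"
        then have "w \<in> SE" using main[OF x] by simp
        then show "w \<le> Sup SE" using bdd by (rule cSup_upper)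
      qed
    qed
  qed
  then show ?thesis unfolding p_cut_V_def p_cut_E_def SV_def SE_def .
qed

theorem proposition5p5:
  shows "\<not> (\<exists>a :: nat \<Rightarrow> nat. (\<forall>n. 0 < a n) \<and> p_cut_E a < p_cut_V a)"
proof
  assume "\<exists>a :: nat \<Rightarrow> nat. (\<forall>n. 0 < a n) \<and> p_cut_E a < p_cut_V a"
  then obtain a :: "nat \<Rightarrow> nat" where "\<forall>n. 0 < a n" "p_cut_E a < p_cut_V a" by blast
  moreover have "p_cut_V a \<le> p_cut_E a" by (rule cut_le) (use \<open>\<forall>n. 0 < a n\<close> in blast)
  ultimately show False by simp
qed


end
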